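(* Let $\alpha\in[0,\infty)^n$ be non-increasing ($\alpha_1\ge\dots\ge\alpha_n$) and let $f\colon\mathcal{B}_n\to\mathcal{H}_d$ satisfy $\|f(x)-f(y)\|\le d_\alpha(x,y)$ for all $x,y\in\mathcal{B}_n$. Let $X$ be a $\mathcal{B}_n$-valued random vector satisfying the stochastic covering property. Let $\mathcal{F}_0$ be the trivial $\sigma$-field, $\mathcal{F}_l=\sigma(X_1,\dots,X_l)$ for $l\in[n]$, and $M_l=\mathbb{E}[f(X)\mid\mathcal{F}_l]-\mathbb{E}[f(X)\mid\mathcal{F}_{l-1}]$. Then for every $l\in[n]$, $M_l^2\preccurlyeq4\alpha_l^2I_d$.
   Context: $\mathcal{B}_n=\{0,1\}^n$, $\mathcal{H}_d$ the $d\times d$ Hermitian matrices, $\|\cdot\|$ operator norm, $\preccurlyeq$ positive semidefinite order, $I_d$ identity. $d_\alpha(x,y)=\sum_i\alpha_i\mathbf{1}\{x_i\ne y_i\}$. For $S\subset[n]$, $x_S=(x_i)_{i\in S}$; $x\triangleright y$ means $x=y$ or $x=y+e_i$ for some $i$. $X$ satisfies the stochastic covering property if for every $S\subset[n]$ and $x,y\in\mathcal{B}_n$ with $x_S\triangleright y_S$ there is a coupling $(U,V)$ of $\mathcal{L}(X_{S^c}\mid X_S=y_S)$ and $\mathcal{L}(X_{S^c}\mid X_S=x_S)$ with $U\triangleright V$ a.s. *)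

theory Defs
  imports "HOL-Analysis.Analysis" "HOL-Probability.Probability"
begin

text \<open>Points of the hypercube B_n are functions nat => bool that vanish
  (are False) outside the index set {0..<n}; coordinates are 0-based.\<close>

definition Bn :: "nat \<Rightarrow> (nat \<Rightarrow> bool) set" where
  "Bn n = {x. \<forall>i\<ge>n. \<not> x i}"

definition dist_alpha :: "nat \<Rightarrow> (nat \<Rightarrow> real) \<Rightarrow> (nat \<Rightarrow> bool) \<Rightarrow> (nat \<Rightarrow> bool) \<Rightarrow> real" where
  "dist_alpha n \<alpha> x y = (\<Sum>i<n. \<alpha> i * (if x i \<noteq> y i then 1 else 0))"

definition restr :: "nat set \<Rightarrow> (nat \<Rightarrow> bool) \<Rightarrow> (nat \<Rightarrow> bool)" where
  "restr S x = (\<lambda>i. if i \<in> S then x i else False)"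

definition covers :: "(nat \<Rightarrow> bool) \<Rightarrow> (nat \<Rightarrow> bool) \<Rightarrow> bool" where
  "covers x y \<longleftrightarrow> x = y \<or> (\<exists>i. \<not> y i \<and> x = y(i := True))"

definition cond_law :: "nat \<Rightarrow> (nat \<Rightarrow> bool) pmf \<Rightarrow> nat set \<Rightarrow> (nat \<Rightarrow> bool) \<Rightarrow> (nat \<Rightarrow> bool) pmf" where
  "cond_law n p S z = map_pmf (restr ({..<n} - S)) (cond_pmf p {w. restr S w = restr S z})"

definition stochastic_covering :: "nat \<Rightarrow> (nat \<Rightarrow> bool) pmf \<Rightarrow> bool" where
  "stochastic_covering n p \<longleftrightarrow>
     (\<forall>S x y. S \<subseteq> {..<n} \<longrightarrow> x \<in> Bn n \<longrightarrow> y \<in> Bn n \<longrightarrow>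
        covers (restr S x) (restr S y) \<longrightarrow>
        measure_pmf.prob p {w. restr S w = restr S x} > 0 \<longrightarrow>
        measure_pmf.prob p {w. restr S w = restr S y} > 0 \<longrightarrow>
        (\<exists>W :: ((nat \<Rightarrow> bool) \<times> (nat \<Rightarrow> bool)) pmf.
            map_pmf fst W = cond_law n p S y \<and>
            map_pmf snd W = cond_law n p S x \<and>
            (\<forall>(u, v) \<in> set_pmf W. covers u v)))"

definition hermitian :: "complex^'d^'d \<Rightarrow> bool" where
  "hermitian A \<longleftrightarrow> (\<forall>i j. A $ i $ j = cnj (A $ j $ i))"

definition quad_form :: "complex^'d^'d \<Rightarrow> complex^'d \<Rightarrow> complex" where
  "quad_form A v = (\<Sum>i\<in>UNIV. cnj (v $ i) * (A *v v) $ i)"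

definition psd :: "complex^'d^'d \<Rightarrow> bool" where
  "psd A \<longleftrightarrow> hermitian A \<and> (\<forall>v. Im (quad_form A v) = 0 \<and> 0 \<le> Re (quad_form A v))"

definition loewner_le :: "complex^'d^'d \<Rightarrow> complex^'d^'d \<Rightarrow> bool" where
  "loewner_le A B \<longleftrightarrow> psd (B - A)"

definition op_norm :: "complex^'d^'d \<Rightarrow> real" where
  "op_norm A = onorm (\<lambda>v. A *v v)"

text \<open>E[f(X) | F_l] evaluated at outcome x, where F_l = sigma(X_0,...,X_{l-1})
  (0-based coordinates); l = 0 gives the trivial sigma-field.\<close>
definition cond_exp :: "(nat \<Rightarrow> bool) pmf \<Rightarrow> ((nat \<Rightarrow> bool) \<Rightarrow> complex^'d^'d) \<Rightarrow> nat \<Rightarrow> (nat \<Rightarrow> bool) \<Rightarrow> complex^'d^'d" where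
  "cond_exp p f l x = measure_pmf.expectation (cond_pmf p {w. restr {..<l} w = restr {..<l} x}) f"

text \<open>Martingale difference M_{l+1} (paper indexing) at outcome x.\<close>
definition mart_diff :: "(nat \<Rightarrow> bool) pmf \<Rightarrow> ((nat \<Rightarrow> bool) \<Rightarrow> complex^'d^'d) \<Rightarrow> nat \<Rightarrow> (nat \<Rightarrow> bool) \<Rightarrow> complex^'d^'d" where
  "mart_diff p f l x = cond_exp p f (Suc l) x - cond_exp p f l x"

end

theory Submission imports Defs begin

lemma mv_lin: "bounded_linear (\<lambda>v::complex^'d. (A::complex^'d^'d) *v v)"
proof -
  have "linear (\<lambda>v::complex^'d. A *v v)"
    by (rule linearI) (auto simp: vec_eq_iff matrix_vector_mult_def sum.distrib distrib_left vector_scaleR_component scaleR_sum_right)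
  then show ?thesis using linear_conv_bounded_linear by blast
qed

lemma mv_diff: "((A::complex^'d^'d) - B) *v v = A *v v - B *v v"
  by (auto simp: vec_eq_iff matrix_vector_mult_def sum_subtractf algebra_simps)

lemma mv_scaleR: "(r *\<^sub>R (A::complex^'d^'d)) *v v = r *\<^sub>R (A *v v)"
  by (auto simp: vec_eq_iff matrix_vector_mult_def vector_scaleR_component scaleR_sum_right)

lemma mv_uminus: "(- (A::complex^'d^'d)) *v v = - (A *v v)"
  by (auto simp: vec_eq_iff matrix_vector_mult_def sum_negf)

lemma mv_zero: "(0::complex^'d^'d) *v v = 0"
  by (auto simp: vec_eq_iff matrix_vector_mult_def)

lemma mv_sum: "(\<Sum>a\<in>F. (g a::complex^'d^'d)) *v v = (\<Sum>a\<in>F. g a *v v)"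
proof (induction F rule: infinite_finite_induct)
  case (infinite A) then show ?case by (simp add: mv_zero)
next
  case empty then show ?case by (simp add: mv_zero)
next
  case (insert x F)
  have "(g x + sum g F) *v v = g x *v v + sum g F *v v"
    by (auto simp: vec_eq_iff matrix_vector_mult_def sum.distrib algebra_simps)
  then show ?case using insert by simp
qed

lemma norm_sq_vec: "of_real (norm (v::complex^'d) ^ 2) = (\<Sum>i\<in>UNIV. cnj (v$i) * v$i)"
proof -
  have "norm v ^ 2 = (\<Sum>i\<in>UNIV. (cmod (v$i))^2)"
    by (simp add: norm_vec_def L2_set_def sum_nonneg)
  then have "of_real (norm v ^ 2) = (\<Sum>i\<in>UNIV. (of_real (cmod (v$i)))^2 :: complex)"
    by simp
  also have "\<dots> = (\<Sum>i\<in>UNIV. cnj (v$i) * v$i)"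
    by (rule sum.cong) (simp_all add: complex_norm_square[symmetric] mult.commute)
  finally show ?thesis .
qed



lemma herm_cnj: "hermitian (M::complex^'d^'d) \<Longrightarrow> cnj (M$j$i) = M$i$j"
  unfolding hermitian_def by metis

lemma herm_swap:
  assumes "hermitian (M::complex^'d^'d)"
  shows "(\<Sum>i\<in>UNIV. cnj (v$i) * (M *v w)$i) = (\<Sum>j\<in>UNIV. cnj ((M *v v)$j) * w$j)"
proof -
  have "(\<Sum>i\<in>UNIV. cnj (v$i) * (M *v w)$i) = (\<Sum>i\<in>UNIV. \<Sum>j\<in>UNIV. cnj (v$i) * M$i$j * w$j)"
    by (simp add: matrix_vector_mult_def sum_distrib_left mult.assoc)
  also have "\<dots> = (\<Sum>j\<in>UNIV. \<Sum>i\<in>UNIV. cnj (v$i) * M$i$j * w$j)"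
    by (rule sum.swap)
  also have "\<dots> = (\<Sum>j\<in>UNIV. cnj ((M *v v)$j) * w$j)"
  proof (rule sum.cong[OF refl])
    fix j
    have "cnj ((M *v v)$j) = (\<Sum>i\<in>UNIV. cnj (M$j$i) * cnj (v$i))"
      by (simp add: matrix_vector_mult_def)
    also have "\<dots> = (\<Sum>i\<in>UNIV. M$i$j * cnj (v$i))"
      using herm_cnj[OF assms] by simp
    finally show "(\<Sum>i\<in>UNIV. cnj (v$i) * M$i$j * w$j) = cnj ((M *v v)$j) * w$j"
      by (simp add: sum_distrib_right sum_distrib_left mult_ac)
  qed
  finally show ?thesis .
qed

lemma hermitian_sq:
  assumes "hermitian (M::complex^'d^'d)" shows "hermitian (M ** M)"
  unfolding hermitian_def
proof (intro allI)
  fix i j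
  have "cnj ((M ** M)$j$i) = (\<Sum>k\<in>UNIV. cnj (M$j$k) * cnj (M$k$i))"
    by (simp add: matrix_matrix_mult_def)
  also have "\<dots> = (\<Sum>k\<in>UNIV. M$k$j * M$i$k)"
    using herm_cnj[OF assms] by simp
  also have "\<dots> = (M ** M)$i$j"
    by (simp add: matrix_matrix_mult_def mult.commute)
  finally show "(M ** M)$i$j = cnj ((M ** M)$j$i)" by simp
qed

lemma hermitian_diff: "hermitian (A::complex^'d^'d) \<Longrightarrow> hermitian B \<Longrightarrow> hermitian (A - B)"
  unfolding hermitian_def by (metis complex_cnj_diff vector_minus_component)

lemma hermitian_scaled_id: "hermitian ((c::real) *\<^sub>R (mat 1 :: complex^'d^'d))"
  unfolding hermitian_def by (auto simp: mat_def)


lemma psd_bound: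
  fixes M :: "complex^'d^'d"
  assumes "hermitian M" "0 \<le> c" "\<And>v. norm (M *v v) \<le> c * norm v"
  shows "loewner_le (M ** M) ((c^2) *\<^sub>R mat 1)"
proof -
  have q: "quad_form ((c^2) *\<^sub>R mat 1 - M ** M) v = of_real (c^2 * norm v ^ 2 - norm (M *v v) ^ 2)" for v
  proof -
    have "quad_form ((c^2) *\<^sub>R mat 1 - M ** M) v
       = (\<Sum>i\<in>UNIV. cnj (v$i) * (c^2 *\<^sub>R v$i)) - (\<Sum>i\<in>UNIV. cnj (v$i) * (M *v (M *v v))$i)"
      unfolding quad_form_def
      by (simp add: mv_diff mv_scaleR matrix_vector_mul_assoc matrix_vector_mul_lid
          sum_subtractf right_diff_distrib)
    also have "(\<Sum>i\<in>UNIV. cnj (v$i) * (c^2 *\<^sub>R v$i)) = of_real (c^2) * (\<Sum>i\<in>UNIV. cnj (v$i) * v$i)"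
      by (simp add: sum_distrib_left scaleR_conv_of_real mult_ac)
    also have "\<dots> = of_real (c^2) * of_real (norm v ^ 2)"
      by (simp only: norm_sq_vec)
    also have "(\<Sum>i\<in>UNIV. cnj (v$i) * (M *v (M *v v))$i) = of_real (norm (M *v v) ^ 2)"
      by (simp only: herm_swap[OF assms(1), of v "M *v v"] norm_sq_vec)
    finally show ?thesis by simp
  qed
  have "c * norm v \<ge> 0" for v :: "complex^'d" using assms(2) by simp
  then have "norm (M *v v) ^ 2 \<le> (c * norm v) ^ 2" for v
    using assms(3) by (simp add: power_mono)
  then have "0 \<le> c^2 * norm v ^ 2 - norm (M *v v) ^ 2" for v
    by (simp add: power_mult_distrib)
  then show ?thesis
    unfolding loewner_le_def psd_def
    using q hermitian_diff[OF hermitian_scaled_id hermitian_sq[OF assms(1)]]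
    by simp
qed

lemma finite_Bn: "finite (Bn n)"
proof -
  have "Bn n \<subseteq> (\<lambda>S i. i \<in> S) ` Pow {..<n}"
  proof
    fix x assume "x \<in> Bn n"
    then have "x = (\<lambda>i. i \<in> {i. i < n \<and> x i})" unfolding Bn_def
      by (auto simp: fun_eq_iff not_le[symmetric])
    then show "x \<in> (\<lambda>S i. i \<in> S) ` Pow {..<n}" by blast
  qed
  then show ?thesis by (rule finite_subset) simp
qed

lemma exp_sum:
  "finite (set_pmf q) \<Longrightarrow> measure_pmf.expectation q (g :: _ \<Rightarrow> complex^'d^'d) = (\<Sum>z\<in>set_pmf q. pmf q z *\<^sub>R g z)"
  by (rule integral_measure_pmf) auto

lemma exp_cong:
  assumes "finite (set_pmf q)" "\<And>w. w \<in> set_pmf q \<Longrightarrow> g w = h w"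
  shows "measure_pmf.expectation q g = measure_pmf.expectation q (h :: _ \<Rightarrow> complex^'d^'d)"
  unfolding exp_sum[OF assms(1)] using assms(2) by (intro sum.cong) auto

lemma exp_bound:
  fixes g :: "_ \<Rightarrow> complex^'d^'d"
  assumes "finite (set_pmf q)" "0 \<le> c" "\<And>z v. z \<in> set_pmf q \<Longrightarrow> norm (g z *v v) \<le> c * norm v"
  shows "norm (measure_pmf.expectation q g *v v) \<le> c * norm v"
proof -
  have "measure_pmf.expectation q g *v v = (\<Sum>z\<in>set_pmf q. pmf q z *\<^sub>R (g z *v v))"
    by (simp add: exp_sum[OF assms(1)] mv_sum mv_scaleR)
  also have "norm \<dots> \<le> (\<Sum>z\<in>set_pmf q. pmf q z * (c * norm v))"
    by (rule order_trans[OF norm_sum]) (auto intro!: sum_mono mult_left_mono assms(3))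
  also have "\<dots> = c * norm v"
    by (simp add: sum_distrib_right[symmetric] sum_pmf_eq_1[OF assms(1) order_refl])
  finally show ?thesis .
qed

lemma herm_exp:
  fixes g :: "_ \<Rightarrow> complex^'d^'d"
  assumes "finite (set_pmf q)" "\<And>z. z \<in> set_pmf q \<Longrightarrow> hermitian (g z)"
  shows "hermitian (measure_pmf.expectation q g)"
  unfolding exp_sum[OF assms(1)] hermitian_def
proof (intro allI)
  fix i j
  have h: "\<And>z. z \<in> set_pmf q \<Longrightarrow> cnj (g z $j$i) = g z$i$j" using herm_cnj assms(2) by blast
  show "(\<Sum>z\<in>set_pmf q. pmf q z *\<^sub>R g z) $ i $ j = cnj ((\<Sum>z\<in>set_pmf q. pmf q z *\<^sub>R g z) $ j $ i)"
    by (simp add: sum_component cnj_sum h cong: sum.cong)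
qed

lemma cond_exp_sum:
  fixes f :: "_ \<Rightarrow> complex^'d^'d"
  assumes "set_pmf p \<subseteq> Bn n" "set_pmf p \<inter> A \<noteq> {}"
  shows "measure_pmf.expectation (cond_pmf p A) f
     = (1 / measure_pmf.prob p A) *\<^sub>R (\<Sum>w\<in>Bn n. (if w \<in> A then pmf p w else 0) *\<^sub>R f w)"
proof -
  have "measure_pmf.expectation (cond_pmf p A) f = (\<Sum>w\<in>Bn n. pmf (cond_pmf p A) w *\<^sub>R f w)"
    by (rule integral_measure_pmf[OF finite_Bn]) (use assms set_cond_pmf in auto)
  also have "\<dots> = (1 / measure_pmf.prob p A) *\<^sub>R (\<Sum>w\<in>Bn n. (if w \<in> A then pmf p w else 0) *\<^sub>R f w)"
    by (auto simp: pmf_cond[OF assms(2)] scaleR_sum_right intro!: sum.cong)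
  finally show ?thesis .
qed

lemma restr_eq: "(restr S w = restr S z) = (\<forall>i\<in>S. w i = z i)"
  unfolding restr_def fun_eq_iff by auto


lemma finite_cond:
  "finite (set_pmf p) \<Longrightarrow> set_pmf p \<inter> A \<noteq> {} \<Longrightarrow> finite (set_pmf (cond_pmf p A))"
  by (simp add: set_cond_pmf)

lemma cond_to_law:
  fixes f :: "_ \<Rightarrow> complex^'d^'d"
  assumes "set_pmf p \<subseteq> Bn n" "set_pmf p \<inter> {w. restr S w = restr S z} \<noteq> {}"
  shows "measure_pmf.expectation (cond_pmf p {w. restr S w = restr S z}) f
       = measure_pmf.expectation (cond_law n p S z) (\<lambda>u. f (\<lambda>i. restr S z i \<or> u i))"
proof -
  have fin: "finite (set_pmf p)" using assms(1) finite_Bn finite_subset by blast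
  have "measure_pmf.expectation (cond_law n p S z) (\<lambda>u. f (\<lambda>i. restr S z i \<or> u i))
     = measure_pmf.expectation (cond_pmf p {w. restr S w = restr S z})
          (\<lambda>w. f (\<lambda>i. restr S z i \<or> restr ({..<n} - S) w i))"
    unfolding cond_law_def by simp
  also have "\<dots> = measure_pmf.expectation (cond_pmf p {w. restr S w = restr S z}) f"
  proof (rule exp_cong[OF finite_cond[OF fin assms(2)]])
    fix w assume "w \<in> set_pmf (cond_pmf p {w. restr S w = restr S z})"
    then have w: "w \<in> Bn n" "restr S w = restr S z" using assms set_cond_pmf by auto
    have "(\<lambda>i. restr S z i \<or> restr ({..<n} - S) w i) = w"
    proof
      fix i
      show "(restr S z i \<or> restr ({..<n} - S) w i) = w i"
        using w(1) w(2)[unfolded restr_eq] unfolding restr_def Bn_def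
        by (cases "i \<in> S"; cases "i < n") auto
    qed
    then show "f (\<lambda>i. restr S z i \<or> restr ({..<n} - S) w i) = f w" by simp
  qed
  finally show ?thesis by simp
qed

lemma dist_bound:
  assumes alpha_nonneg: "\<And>i. i < n \<Longrightarrow> 0 \<le> \<alpha> i"
    and alpha_noninc: "\<And>i j. i \<le> j \<Longrightarrow> j < n \<Longrightarrow> \<alpha> j \<le> \<alpha> i"
    and "l \<le> j" "j < n" "\<And>i. a i \<noteq> b i \<Longrightarrow> i = l \<or> i = j"
  shows "dist_alpha n \<alpha> a b \<le> 2 * \<alpha> l"
proof -
  have ln: "l < n" using assms by simp
  have "dist_alpha n \<alpha> a b \<le> (\<Sum>i<n. (if i = l then \<alpha> i else 0) + (if i = j then \<alpha> i else 0))"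
    unfolding dist_alpha_def
  proof (rule sum_mono)
    fix i assume "i \<in> {..<n}"
    then have "0 \<le> \<alpha> i" using alpha_nonneg by simp
    then show "\<alpha> i * (if a i \<noteq> b i then 1 else 0) \<le> (if i = l then \<alpha> i else 0) + (if i = j then \<alpha> i else 0)"
      using assms(5)[of i] by auto
  qed
  also have "\<dots> = \<alpha> l + \<alpha> j"
    using ln assms(4) by (simp add: sum.distrib)
  also have "\<dots> \<le> 2 * \<alpha> l" using alpha_noninc[OF assms(3,4)] by simp
  finally show ?thesis .
qed

lemma coupling_bound:
  fixes f :: "(nat \<Rightarrow> bool) \<Rightarrow> complex^'d^'d"
  assumes alpha_nonneg: "\<And>i. i < n \<Longrightarrow> 0 \<le> \<alpha> i"
    and alpha_noninc: "\<And>i j. i \<le> j \<Longrightarrow> j < n \<Longrightarrow> \<alpha> j \<le> \<alpha> i"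
    and f_lip: "\<And>x y. x \<in> Bn n \<Longrightarrow> y \<in> Bn n \<Longrightarrow> op_norm (f x - f y) \<le> dist_alpha n \<alpha> x y"
    and X_range: "set_pmf p \<subseteq> Bn n"
    and SCP: "stochastic_covering n p"
    and l: "l < n"
    and xB: "x \<in> Bn n"
    and pos1: "set_pmf p \<inter> {w. restr {..<Suc l} w = restr {..<Suc l} (x(l:=True))} \<noteq> {}"
    and pos0: "set_pmf p \<inter> {w. restr {..<Suc l} w = restr {..<Suc l} (x(l:=False))} \<noteq> {}"
  shows "norm ((measure_pmf.expectation (cond_pmf p {w. restr {..<Suc l} w = restr {..<Suc l} (x(l:=True))}) f
              - measure_pmf.expectation (cond_pmf p {w. restr {..<Suc l} w = restr {..<Suc l} (x(l:=False))}) f) *v v)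
         \<le> 2 * \<alpha> l * norm v"
proof -
  define S1 where "S1 = {..<Suc l}"
  define R where "R = {..<n} - S1"
  define x1 where "x1 = x(l:=True)"
  define x0 where "x0 = x(l:=False)"
  define c1 where "c1 = restr S1 x1"
  define c0 where "c0 = restr S1 x0"
  have fin: "finite (set_pmf p)" using X_range finite_Bn finite_subset by blast
  have S1n: "S1 \<subseteq> {..<n}" using l unfolding S1_def by auto
  have x1B: "x1 \<in> Bn n" and x0B: "x0 \<in> Bn n" using xB l unfolding x1_def x0_def Bn_def by auto
  have cov: "covers c1 c0"
    unfolding covers_def c1_def c0_def x1_def x0_def S1_def
    by (rule disjI2, rule exI[of _ l]) (auto simp: restr_def fun_eq_iff)
  have p1: "measure_pmf.prob p {w. restr S1 w = restr S1 x1} > 0"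
    using pos1 measure_pmf_zero_iff[of p] measure_nonneg[of p]
    unfolding S1_def x1_def by (metis less_eq_real_def)
  have p0: "measure_pmf.prob p {w. restr S1 w = restr S1 x0} > 0"
    using pos0 measure_pmf_zero_iff[of p] measure_nonneg[of p]
    unfolding S1_def x0_def by (metis less_eq_real_def)
  obtain W where W0: "map_pmf fst W = cond_law n p S1 x0"
    and W1: "map_pmf snd W = cond_law n p S1 x1"
    and Wc: "\<forall>(u, v) \<in> set_pmf W. covers u v"
    using SCP[unfolded stochastic_covering_def, rule_format, OF S1n x1B x0B cov[unfolded c1_def c0_def] p1 p0]
    by blast
  have finlaw: "finite (set_pmf (cond_law n p S1 z))" if "set_pmf p \<inter> {w. restr S1 w = restr S1 z} \<noteq> {}" for z
    unfolding cond_law_def using finite_cond[OF fin that] by simp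
  have finW: "finite (set_pmf W)"
  proof (rule finite_subset)
    show "set_pmf W \<subseteq> set_pmf (map_pmf fst W) \<times> set_pmf (map_pmf snd W)" by force
    show "finite (set_pmf (map_pmf fst W) \<times> set_pmf (map_pmf snd W))"
      unfolding W0 W1 using finlaw pos0 pos1 unfolding S1_def x0_def x1_def by blast
  qed
  define F1 where "F1 = (\<lambda>u. f (\<lambda>i. c1 i \<or> u i))"
  define F0 where "F0 = (\<lambda>u. f (\<lambda>i. c0 i \<or> u i))"
  have H1: "measure_pmf.expectation (cond_pmf p {w. restr S1 w = restr S1 x1}) f
       = measure_pmf.expectation W (\<lambda>z. F1 (snd z))"
    using cond_to_law[OF X_range, of S1 x1 f] pos1 unfolding S1_def x1_def F1_def c1_def
    by (simp flip: W1[unfolded S1_def x1_def])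
  have H0: "measure_pmf.expectation (cond_pmf p {w. restr S1 w = restr S1 x0}) f
       = measure_pmf.expectation W (\<lambda>z. F0 (fst z))"
    using cond_to_law[OF X_range, of S1 x0 f] pos0 unfolding S1_def x0_def F0_def c0_def
    by (simp flip: W0[unfolded S1_def x0_def])
  have diff: "measure_pmf.expectation W (\<lambda>z. F1 (snd z)) - measure_pmf.expectation W (\<lambda>z. F0 (fst z))
      = measure_pmf.expectation W (\<lambda>z. F1 (snd z) - F0 (fst z))"
    by (rule Bochner_Integration.integral_diff[symmetric]) (auto intro: integrable_measure_pmf_finite[OF finW])
  have bound: "norm ((F1 (snd z) - F0 (fst z)) *v v) \<le> 2 * \<alpha> l * norm v" if z: "z \<in> set_pmf W" for z v
  proof -
    obtain u v' where zuv: "z = (u, v')" by (cases z)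
    have "u \<in> set_pmf (map_pmf fst W)" using z zuv by force
    then obtain w0 where u: "u = restr R w0" unfolding W0 cond_law_def R_def by auto
    have "v' \<in> set_pmf (map_pmf snd W)" using z zuv by force
    then obtain w1 where v': "v' = restr R w1" unfolding W1 cond_law_def R_def by auto
    have cuv: "covers u v'" using Wc z zuv by auto
    define a where "a = (\<lambda>i. c1 i \<or> v' i)"
    define b where "b = (\<lambda>i. c0 i \<or> u i)"
    have aB: "a \<in> Bn n" and bB: "b \<in> Bn n"
      unfolding a_def b_def Bn_def c1_def c0_def u v' R_def restr_def S1_def using l by auto
    have cc: "c1 i = c0 i" if "i \<noteq> l" for i
      using that unfolding c1_def c0_def x1_def x0_def restr_def by auto
    obtain j where j: "l \<le> j" "j < n" "\<And>i. a i \<noteq> b i \<Longrightarrow> i = l \<or> i = j"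
    proof (cases "u = v'")
      case True
      show ?thesis by (rule that[of l]) (use l cc True in \<open>auto simp: a_def b_def\<close>)
    next
      case False
      then obtain k where k: "\<not> v' k" "u = v'(k := True)" using cuv unfolding covers_def by blast
      then have "u k" by simp
      then have kR: "k \<in> R" unfolding u restr_def by (auto split: if_splits)
      then have "l \<le> k" "k < n" unfolding R_def S1_def by auto
      then show ?thesis
        by (rule that) (use cc k in \<open>auto simp: a_def b_def\<close>)
    qed
    have "norm ((f a - f b) *v v) \<le> op_norm (f a - f b) * norm v"
      unfolding op_norm_def by (rule onorm[OF mv_lin])
    also have "\<dots> \<le> dist_alpha n \<alpha> a b * norm v"
      by (rule mult_right_mono[OF f_lip[OF aB bB]]) simp
    also have "\<dots> \<le> 2 * \<alpha> l * norm v"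
      by (rule mult_right_mono[OF dist_bound[OF alpha_nonneg alpha_noninc j]]) auto
    finally show ?thesis unfolding zuv F1_def F0_def a_def b_def by simp
  qed
  have "norm ((measure_pmf.expectation W (\<lambda>z. F1 (snd z) - F0 (fst z))) *v v) \<le> 2 * \<alpha> l * norm v"
    by (rule exp_bound[OF finW]) (use alpha_nonneg l bound in auto)
  then show ?thesis using H1 H0 diff unfolding S1_def x1_def x0_def by simp
qed


theorem lemma5p1:
  fixes n :: nat and \<alpha> :: "nat \<Rightarrow> real"
    and f :: "(nat \<Rightarrow> bool) \<Rightarrow> complex^'d^'d"
    and p :: "(nat \<Rightarrow> bool) pmf"
  assumes alpha_nonneg: "\<And>i. i < n \<Longrightarrow> 0 \<le> \<alpha> i"
    and alpha_noninc: "\<And>i j. i \<le> j \<Longrightarrow> j < n \<Longrightarrow> \<alpha> j \<le> \<alpha> i"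
    and f_herm: "\<And>x. x \<in> Bn n \<Longrightarrow> hermitian (f x)"
    and f_lip: "\<And>x y. x \<in> Bn n \<Longrightarrow> y \<in> Bn n \<Longrightarrow> op_norm (f x - f y) \<le> dist_alpha n \<alpha> x y"
    and X_range: "set_pmf p \<subseteq> Bn n"
    and SCP: "stochastic_covering n p"
    and l: "l < n"
  shows "\<forall>x \<in> set_pmf p.
           loewner_le (mart_diff p f l x ** mart_diff p f l x) ((4 * (\<alpha> l)\<^sup>2) *\<^sub>R mat 1)"
proof
  fix x assume x: "x \<in> set_pmf p"
  have xB: "x \<in> Bn n" using X_range x by auto
  have fin: "finite (set_pmf p)" using X_range finite_Bn finite_subset by blast
  define x1 where "x1 = x(l:=True)"
  define x0 where "x0 = x(l:=False)"
  define A0 where "A0 = {w. restr {..<l} w = restr {..<l} x}"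
  define A1 where "A1 = {w. restr {..<Suc l} w = restr {..<Suc l} x1}"
  define B where "B = {w. restr {..<Suc l} w = restr {..<Suc l} x0}"
  define H where "H = (\<lambda>A. measure_pmf.expectation (cond_pmf p A) f)"
  define G where "G = (\<lambda>A. \<Sum>w\<in>Bn n. (if w \<in> A then pmf p w else 0) *\<^sub>R f w)"
  define P where "P = (\<lambda>A. measure_pmf.prob p A)"
  have A0un: "A0 = A1 \<union> B"
  proof (rule set_eqI)
    fix w
    show "w \<in> A0 \<longleftrightarrow> w \<in> A1 \<union> B"
    proof
      assume "w \<in> A0"
      then have h: "\<forall>i<l. w i = x i" by (simp add: A0_def restr_eq)
      show "w \<in> A1 \<union> B"
      proof (cases "w l")
        case True
        then have "w \<in> A1" using h unfolding A1_def restr_eq x1_def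
          by (auto simp: less_Suc_eq)
        then show ?thesis by simp
      next
        case False
        then have "w \<in> B" using h unfolding B_def restr_eq x0_def
          by (auto simp: less_Suc_eq)
        then show ?thesis by simp
      qed
    next
      assume "w \<in> A1 \<union> B"
      then show "w \<in> A0" unfolding A0_def A1_def B_def restr_eq x1_def x0_def
        by auto
    qed
  qed
  have disj: "A1 \<inter> B = {}" unfolding A1_def B_def x1_def x0_def restr_eq by auto
  have xA0: "x \<in> A0" unfolding A0_def by simp
  have cur: "{w. restr {..<Suc l} w = restr {..<Suc l} x} = (if x l then A1 else B)"
    unfolding A1_def B_def x1_def x0_def by (auto simp: fun_upd_idem)
  have md: "mart_diff p f l x = H (if x l then A1 else B) - H A0"
    unfolding mart_diff_def cond_exp_def H_def A0_def cur[symmetric] ..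
  have Pun: "P A0 = P A1 + P B"
    unfolding P_def A0un by (rule measure_pmf.finite_measure_Union) (use disj in auto)
  have Gun: "G A0 = G A1 + G B"
    unfolding G_def A0un by (subst sum.distrib[symmetric], rule sum.cong) (use disj in auto)
  have HG: "H A = (1 / P A) *\<^sub>R G A" if "set_pmf p \<inter> A \<noteq> {}" for A
    unfolding H_def P_def G_def by (rule cond_exp_sum[OF X_range that])
  have Ppos: "P A > 0" if "set_pmf p \<inter> A \<noteq> {}" for A
    using that measure_pmf_zero_iff[of p A] measure_nonneg[of p A] unfolding P_def
    by (metis less_eq_real_def)
  have Pzero: "G A = 0" if "P A = 0" for A
  proof -
    have "set_pmf p \<inter> A = {}" using that measure_pmf_zero_iff[of p A] unfolding P_def by simp
    then have "\<And>w. w \<in> A \<Longrightarrow> pmf p w = 0" by (auto simp: pmf_eq_0_set_pmf)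
    then show ?thesis unfolding G_def by (auto intro!: sum.neutral)
  qed
  have herm: "hermitian (H A)" if "set_pmf p \<inter> A \<noteq> {}" for A
    unfolding H_def
    by (rule herm_exp[OF finite_cond[OF fin that]]) (use that X_range f_herm set_cond_pmf in auto)
  have ne0: "set_pmf p \<inter> A0 \<noteq> {}" using x xA0 by blast
  have necur: "set_pmf p \<inter> (if x l then A1 else B) \<noteq> {}"
    using x cur by auto
  define M where "M = mart_diff p f l x"
  have hermM: "hermitian M" unfolding M_def md by (rule hermitian_diff[OF herm[OF necur] herm[OF ne0]])
  have a0: "0 \<le> \<alpha> l" using alpha_nonneg l by simp
  have Mbound: "norm (M *v v) \<le> (2 * \<alpha> l) * norm v" for v
  proof (cases "P A1 = 0 \<or> P B = 0")
    case True
    have "M = 0"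
    proof (cases "P A1 = 0")
      case True
      then have "\<not> set_pmf p \<inter> A1 \<noteq> {}" using Ppos by fastforce
      then have nxl: "\<not> x l" using necur by auto
      have "H A0 = H B"
        using HG[OF ne0] HG[of B] necur nxl Pun Gun Pzero[OF True] True by simp
      then show ?thesis unfolding M_def md using nxl by simp
    next
      case False
      then have PB: "P B = 0" using \<open>P A1 = 0 \<or> P B = 0\<close> by simp
      then have "\<not> set_pmf p \<inter> B \<noteq> {}" using Ppos by fastforce
      then have xl: "x l" using necur by auto
      have "H A0 = H A1"
        using HG[OF ne0] HG[of A1] necur xl Pun Gun Pzero[OF PB] PB by simp
      then show ?thesis unfolding M_def md using xl by simp
    qed
    then show ?thesis using a0 by (simp add: mv_zero)
  next
    case False
    then have ne1: "set_pmf p \<inter> A1 \<noteq> {}" and neB: "set_pmf p \<inter> B \<noteq> {}"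
      using measure_pmf_zero_iff[of p A1] measure_pmf_zero_iff[of p B] unfolding P_def by auto
    have q1: "P A1 > 0" and qB: "P B > 0" using Ppos ne1 neB by auto
    define D where "D = H A1 - H B"
    have Dbound: "norm (D *v v) \<le> 2 * \<alpha> l * norm v"
      unfolding D_def H_def A1_def B_def x1_def x0_def
      by (rule coupling_bound[OF alpha_nonneg alpha_noninc f_lip X_range SCP l xB])
         (use ne1 neB in \<open>auto simp: A1_def B_def x1_def x0_def\<close>)
    have G1: "G A1 = P A1 *\<^sub>R H A1" using HG[OF ne1] q1 by simp
    have GB: "G B = P B *\<^sub>R H B" using HG[OF neB] qB by simp
    define t where "t = P A1 / P A0"
    have t01: "0 \<le> t" "t \<le> 1" using q1 qB Pun unfolding t_def by auto
    have H0: "H A0 = t *\<^sub>R H A1 + (1 - t) *\<^sub>R H B"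
    proof -
      have "1 - t = P B / P A0" using q1 qB Pun unfolding t_def by (simp add: field_simps)
      then show ?thesis
        unfolding HG[OF ne0] Gun G1 GB t_def
        by (simp add: scaleR_add_right)
    qed
    have "M = (1 - t) *\<^sub>R D \<or> M = - (t *\<^sub>R D)"
      unfolding M_def md H0 D_def
      by (cases "x l") (simp_all add: algebra_simps)
    then have "norm (M *v v) \<le> max t (1 - t) * norm (D *v v)"
      using t01 by (auto simp: mv_scaleR mv_uminus intro!: mult_right_mono)
    also have "\<dots> \<le> 1 * (2 * \<alpha> l * norm v)"
      by (rule mult_mono) (use t01 Dbound in auto)
    finally show ?thesis by simp
  qed
  have "loewner_le (M ** M) (((2 * \<alpha> l)^2) *\<^sub>R mat 1)"
    by (rule psd_bound[OF hermM]) (use a0 Mbound in auto)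
  then show "loewner_le (mart_diff p f l x ** mart_diff p f l x) ((4 * (\<alpha> l)\<^sup>2) *\<^sub>R mat 1)"
    unfolding M_def by (simp add: power_mult_distrib)
qed

end
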